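(* Let $\Gamma$ and $\Gamma'$ be two paths in $B(\mathfrak S_n)$ belonging to the same flipclass. Then: the groups $W(\Gamma)$ and $W(\Gamma')$ coincide; the vertex sets of $G(\Gamma)$ and $G(\Gamma')$ coincide; and $G(\Gamma)$ and $G(\Gamma')$ have the same number of connected components.
   Context: $\mathfrak S_n$ is the symmetric group on $[n]$, $T$ its transpositions, $\ell$ the length w.r.t. simple transpositions. The Bruhat graph $B(\mathfrak S_n)$ has an edge $x\xrightarrow{t}y$ iff $yx^{-1}=t\in T$ and $\ell(x)<\ell(y)$; $P_h(u,v)$ is the set of paths $u=x_0\to\cdots\to x_h=v$ of length $h$. Between two fixed vertices there are $0$ or $2$ paths of length $2$, each the flip of the other; the $i$-th flip operator $f_i$ ($i\in[h-1]$) on $P_h(u,v)$ replaces $x_{i-1}\to x_i\to x_{i+1}$ by its flip; flipclasses are the orbits of $\langle f_1,\dots,f_{h-1}\rangle$ on $P_h(u,v)$. For a path $\Gamma=(x_0\xrightarrow{t_1}x_1\xrightarrow{t_2}\cdots\xrightarrow{t_h}x_h)$, $W(\Gamma)$ is the subgroup of $\mathfrak S_n$ generated by $t_1,\dots,t_h$, and $G(\Gamma)$ is the edge-labelled undirected multigraph with vertex set $\{a\in[n]: t_i(a)\ne a\text{ for some }i\in[h]\}$ and an edge labelled $i$ between $a$ and $b$ whenever $t_i=(a,b)$. *)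

theory Defs
  imports "HOL-Algebra.Sym_Groups" "HOL-Algebra.Generated_Groups"
begin

text \<open>Elements of the symmetric group S_n: permutations of {1..n}, as functions nat => nat
  (the carrier of sym_group n).  Products are compositions: x y = x \<circ> y.\<close>

definition simple_transpositions :: "nat \<Rightarrow> (nat \<Rightarrow> nat) set" where
  "simple_transpositions n = {Transposition.transpose i (i + 1) | i. 1 \<le> i \<and> i < n}"

definition perm_length :: "nat \<Rightarrow> (nat \<Rightarrow> nat) \<Rightarrow> nat" where
  "perm_length n x = (LEAST k. \<exists>ws. length ws = k \<and> set ws \<subseteq> simple_transpositions n
                                 \<and> x = foldr (\<circ>) ws id)"

definition transpositions :: "nat \<Rightarrow> (nat \<Rightarrow> nat) set" where
  "transpositions n = {Transposition.transpose a b | a b. a \<in> {1..n} \<and> b \<in> {1..n} \<and> a \<noteq> b}"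

definition bruhat_edge :: "nat \<Rightarrow> (nat \<Rightarrow> nat) \<Rightarrow> (nat \<Rightarrow> nat) \<Rightarrow> bool" where
  "bruhat_edge n x y \<longleftrightarrow> x permutes {1..n} \<and> y permutes {1..n}
     \<and> y \<circ> inv' x \<in> transpositions n \<and> perm_length n x < perm_length n y"

text \<open>A path x_0 -> ... -> x_h, represented by the list [x_0, ..., x_h] of its vertices.
  It lies in P_h(u,v) with h = length - 1, u = hd, v = last.\<close>
definition bruhat_path :: "nat \<Rightarrow> (nat \<Rightarrow> nat) list \<Rightarrow> bool" where
  "bruhat_path n xs \<longleftrightarrow> xs \<noteq> [] \<and> (\<forall>i. i + 1 < length xs \<longrightarrow> bruhat_edge n (xs ! i) (xs ! (i + 1)))"

definition path_labels :: "(nat \<Rightarrow> nat) list \<Rightarrow> (nat \<Rightarrow> nat) list" where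
  "path_labels xs = map (\<lambda>i. xs ! (i + 1) \<circ> inv' (xs ! i)) [0..<length xs - 1]"

text \<open>Flip operator f_i (1 <= i <= h-1): ys = f_i xs iff ys is the path obtained by replacing
  x_{i-1} -> x_i -> x_{i+1} by the other length-2 path between x_{i-1} and x_{i+1}
  (there are exactly two such paths).\<close>
definition flip_at :: "nat \<Rightarrow> nat \<Rightarrow> (nat \<Rightarrow> nat) list \<Rightarrow> (nat \<Rightarrow> nat) list \<Rightarrow> bool" where
  "flip_at n i xs ys \<longleftrightarrow> bruhat_path n xs \<and> 1 \<le> i \<and> i + 1 < length xs
     \<and> (\<exists>y. y \<noteq> xs ! i \<and> ys = xs[i := y]) \<and> bruhat_path n ys"

definition flip_step :: "nat \<Rightarrow> (nat \<Rightarrow> nat) list \<Rightarrow> (nat \<Rightarrow> nat) list \<Rightarrow> bool" where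
  "flip_step n xs ys \<longleftrightarrow> (\<exists>i. flip_at n i xs ys)"

text \<open>Same flipclass: same orbit of the group generated by the flip operators
  (involutions), i.e. related by a finite sequence of flips.\<close>
definition same_flipclass :: "nat \<Rightarrow> (nat \<Rightarrow> nat) list \<Rightarrow> (nat \<Rightarrow> nat) list \<Rightarrow> bool" where
  "same_flipclass n xs ys \<longleftrightarrow> bruhat_path n xs \<and> (flip_step n)\<^sup>*\<^sup>* xs ys"

definition W_group :: "nat \<Rightarrow> (nat \<Rightarrow> nat) list \<Rightarrow> (nat \<Rightarrow> nat) set" where
  "W_group n xs = generate (sym_group n) (set (path_labels xs))"

text \<open>G(Gamma): vertices and (undirected, labelled multi-) edges.\<close>
definition G_vertices :: "nat \<Rightarrow> (nat \<Rightarrow> nat) list \<Rightarrow> nat set" where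
  "G_vertices n xs = {a \<in> {1..n}. \<exists>t \<in> set (path_labels xs). t a \<noteq> a}"

definition G_edges :: "(nat \<Rightarrow> nat) list \<Rightarrow> (nat \<times> nat \<times> nat) set" where
  "G_edges xs = {(a, i, b) | a i b. 1 \<le> i \<and> i \<le> length (path_labels xs) \<and> a \<noteq> b
                  \<and> path_labels xs ! (i - 1) = Transposition.transpose a b}"

definition G_adj :: "(nat \<Rightarrow> nat) list \<Rightarrow> (nat \<times> nat) set" where
  "G_adj xs = {(a, b). \<exists>i. (a, i, b) \<in> G_edges xs}"

definition G_components :: "nat \<Rightarrow> (nat \<Rightarrow> nat) list \<Rightarrow> nat set set" where
  "G_components n xs = (\<lambda>a. (G_adj xs)\<^sup>* `` {a} \<inter> G_vertices n xs) ` G_vertices n xs"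

definition G_num_components :: "nat \<Rightarrow> (nat \<Rightarrow> nat) list \<Rightarrow> nat" where
  "G_num_components n xs = card (G_components n xs)"

end

theory Submission
  imports Defs
begin

lemma CL:
  fixes a b c d p q r s u v :: nat
  assumes "a\<noteq>b" "c\<noteq>d" "p\<noteq>q" "r\<noteq>s" "\<not>((a=c\<and>b=d)\<or>(a=d\<and>b=c))"
    and eq: "transpose r s \<circ> transpose p q = transpose c d \<circ> transpose a b"
    and uv: "(u=p\<and>v=q)\<or>(u=r\<and>v=s)"
  shows "(u=a\<and>v=b)\<or>(u=b\<and>v=a)\<or>(u=c\<and>v=d)\<or>(u=d\<and>v=c)
   \<or> (a=c\<and>((u=b\<and>v=d)\<or>(u=d\<and>v=b))) \<or> (a=d\<and>((u=b\<and>v=c)\<or>(u=c\<and>v=b)))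
   \<or> (b=c\<and>((u=a\<and>v=d)\<or>(u=d\<and>v=a))) \<or> (b=d\<and>((u=a\<and>v=c)\<or>(u=c\<and>v=a)))"
proof -
  have e: "\<And>x. transpose r s (transpose p q x) = transpose c d (transpose a b x)"
    using eq by (metis comp_apply)
  note E = e[of a] e[of b] e[of c] e[of d] e[of p] e[of q] e[of r] e[of s]
  show ?thesis using E assms unfolding transpose_def by smt
qed

lemma teq:
  fixes a b c d :: nat
  assumes "a \<noteq> b" "transpose a b = transpose c d"
  shows "(a=c\<and>b=d)\<or>(a=d\<and>b=c)"
proof -
  have "transpose c d a = b" "transpose c d b = a" using assms(2)
    by (metis transpose_apply_first, metis transpose_apply_second)
  thus ?thesis using assms(1) by (auto simp: transpose_eq_iff)
qed

definition good :: "(nat \<Rightarrow> nat) set \<Rightarrow> (nat \<Rightarrow> nat) \<Rightarrow> bool" where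
  "good L \<sigma> \<longleftrightarrow> \<sigma> \<in> L \<or> (\<exists>x y z. x\<noteq>y \<and> x\<noteq>z \<and> y\<noteq>z \<and> \<sigma> = transpose y z
      \<and> transpose x y \<in> L \<and> transpose x z \<in> L)"

lemma tri:
  assumes "x\<noteq>y" "x\<noteq>z" "y\<noteq>z" "\<sigma> = transpose y z"
    "transpose x y \<in> L" "transpose x z \<in> L"
  shows "good L \<sigma>"
  using assms unfolding good_def by blast

lemma CL2:
  assumes "\<tau>1 \<in> transpositions n" "\<tau>2 \<in> transpositions n" "\<sigma>1 \<in> transpositions n"
    "\<sigma>2 \<in> transpositions n" "\<tau>1 \<noteq> \<tau>2" "\<sigma>2 \<circ> \<sigma>1 = \<tau>2 \<circ> \<tau>1" "\<sigma> \<in> {\<sigma>1, \<sigma>2}"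
  shows "good {\<tau>1, \<tau>2} \<sigma>"
proof -
  obtain a b where ab: "a \<noteq> b" "\<tau>1 = transpose a b" using assms(1) unfolding transpositions_def by auto
  obtain c d where cd: "c \<noteq> d" "\<tau>2 = transpose c d" using assms(2) unfolding transpositions_def by auto
  obtain p q where pq: "p \<noteq> q" "\<sigma>1 = transpose p q" using assms(3) unfolding transpositions_def by auto
  obtain r s where rs: "r \<noteq> s" "\<sigma>2 = transpose r s" using assms(4) unfolding transpositions_def by auto
  obtain u v where uv: "(u=p\<and>v=q)\<or>(u=r\<and>v=s)" "\<sigma> = transpose u v" using assms(7) pq rs by auto
  have nt: "\<not>((a=c\<and>b=d)\<or>(a=d\<and>b=c))" using assms(5) ab cd by (auto simp: transpose_commute)
  have "(u=a\<and>v=b)\<or>(u=b\<and>v=a)\<or>(u=c\<and>v=d)\<or>(u=d\<and>v=c)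
   \<or> (a=c\<and>((u=b\<and>v=d)\<or>(u=d\<and>v=b))) \<or> (a=d\<and>((u=b\<and>v=c)\<or>(u=c\<and>v=b)))
   \<or> (b=c\<and>((u=a\<and>v=d)\<or>(u=d\<and>v=a))) \<or> (b=d\<and>((u=a\<and>v=c)\<or>(u=c\<and>v=a)))"
    by (rule CL[OF ab(1) cd(1) pq(1) rs(1) nt _ uv(1)]) (use assms(6) ab cd pq rs in simp)
  then show ?thesis
  proof (elim disjE conjE)
    assume h: "u = a" "v = b"
    then show ?thesis using ab cd uv(2) unfolding good_def by (auto simp: transpose_commute)
  next
    assume h: "u = b" "v = a"
    then show ?thesis using ab cd uv(2) unfolding good_def by (auto simp: transpose_commute)
  next
    assume h: "u = c" "v = d"
    then show ?thesis using ab cd uv(2) unfolding good_def by (auto simp: transpose_commute)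
  next
    assume h: "u = d" "v = c"
    then show ?thesis using ab cd uv(2) unfolding good_def by (auto simp: transpose_commute)
  next
    assume h: "a = c" "u = b" "v = d"
    show ?thesis by (rule tri[of a b d]) (use h ab cd nt uv(2) in \<open>auto simp: transpose_commute\<close>)
  next
    assume h: "a = c" "u = d" "v = b"
    show ?thesis by (rule tri[of a d b]) (use h ab cd nt uv(2) in \<open>auto simp: transpose_commute\<close>)
  next
    assume h: "a = d" "u = b" "v = c"
    show ?thesis by (rule tri[of a b c]) (use h ab cd nt uv(2) in \<open>auto simp: transpose_commute\<close>)
  next
    assume h: "a = d" "u = c" "v = b"
    show ?thesis by (rule tri[of a c b]) (use h ab cd nt uv(2) in \<open>auto simp: transpose_commute\<close>)
  next
    assume h: "b = c" "u = a" "v = d"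
    show ?thesis by (rule tri[of b a d]) (use h ab cd nt uv(2) in \<open>auto simp: transpose_commute\<close>)
  next
    assume h: "b = c" "u = d" "v = a"
    show ?thesis by (rule tri[of b d a]) (use h ab cd nt uv(2) in \<open>auto simp: transpose_commute\<close>)
  next
    assume h: "b = d" "u = a" "v = c"
    show ?thesis by (rule tri[of b a c]) (use h ab cd nt uv(2) in \<open>auto simp: transpose_commute\<close>)
  next
    assume h: "b = d" "u = c" "v = a"
    show ?thesis by (rule tri[of b c a]) (use h ab cd nt uv(2) in \<open>auto simp: transpose_commute\<close>)
  qed
qed

lemma good_mono: "good L \<sigma> \<Longrightarrow> L \<subseteq> M \<Longrightarrow> good M \<sigma>"
  unfolding good_def by blast

lemma len_labels: "length (path_labels xs) = length xs - 1"
  by (simp add: path_labels_def)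

lemma labels_nth: "j < length xs - 1 \<Longrightarrow> path_labels xs ! j = xs!(j+1) \<circ> inv' (xs!j)"
  by (simp add: path_labels_def)

lemma labels_trans: "bruhat_path n xs \<Longrightarrow> set (path_labels xs) \<subseteq> transpositions n"
proof
  fix t assume bp: "bruhat_path n xs" and t: "t \<in> set (path_labels xs)"
  then obtain j where j: "j < length xs - 1" "t = path_labels xs ! j"
    by (auto simp: in_set_conv_nth len_labels)
  then have "bruhat_edge n (xs!j) (xs!(j+1))" using bp unfolding bruhat_path_def by auto
  then show "t \<in> transpositions n" using j labels_nth unfolding bruhat_edge_def by auto
qed

lemma trans_carrier: "transpositions n \<subseteq> carrier (sym_group n)"
  unfolding transpositions_def sym_group_def by (auto intro: permutes_swap_id)

lemma trans_invol: "t \<in> transpositions n \<Longrightarrow> t \<circ> t = id"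
  unfolding transpositions_def by auto

lemma flip_good:
  assumes fl: "flip_at n i xs ys" and sg: "\<sigma> \<in> set (path_labels ys)"
  shows "good (set (path_labels xs)) \<sigma>"
proof -
  obtain y where y: "y \<noteq> xs!i" "ys = xs[i:=y]" and bp: "bruhat_path n xs" and bq: "bruhat_path n ys"
    and i: "1 \<le> i" "i + 1 < length xs" using fl unfolding flip_at_def by auto
  define A where "A = xs!(i-1)"
  define B where "B = xs!i"
  define C where "C = xs!(i+1)"
  have len: "length ys = length xs" using y by simp
  have ysA: "ys!(i-1) = A" using y i by (simp add: A_def)
  have ysy: "ys!i = y" using y i by simp
  have ysC: "ys!(i+1) = C" using y i by (simp add: C_def)
  have i1: "i - 1 + 1 = i" "i - 1 + 1 < length xs" using i by auto
  have bpE: "\<And>k. k+1 < length xs \<Longrightarrow> bruhat_edge n (xs!k) (xs!(k+1))"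
    using bp unfolding bruhat_path_def by blast
  have bqE: "\<And>k. k+1 < length ys \<Longrightarrow> bruhat_edge n (ys!k) (ys!(k+1))"
    using bq unfolding bruhat_path_def by blast
  have eAB: "bruhat_edge n A B" using bpE[of "i-1"] i1 by (simp add: A_def B_def)
  have eBC: "bruhat_edge n B C" using bpE[of i] i by (simp add: B_def C_def)
  have eAy: "bruhat_edge n A y" using bqE[of "i-1"] i1 len ysA ysy by simp
  have eyC: "bruhat_edge n y C" using bqE[of i] i len ysy ysC by simp
  define \<tau>1 where "\<tau>1 = B \<circ> inv' A"
  define \<tau>2 where "\<tau>2 = C \<circ> inv' B"
  define \<sigma>1 where "\<sigma>1 = y \<circ> inv' A"
  define \<sigma>2 where "\<sigma>2 = C \<circ> inv' y"
  have t1: "\<tau>1 \<in> transpositions n" using eAB unfolding bruhat_edge_def \<tau>1_def by auto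
  have t2: "\<tau>2 \<in> transpositions n" using eBC unfolding bruhat_edge_def \<tau>2_def by auto
  have s1: "\<sigma>1 \<in> transpositions n" using eAy unfolding bruhat_edge_def \<sigma>1_def by auto
  have s2: "\<sigma>2 \<in> transpositions n" using eyC unfolding bruhat_edge_def \<sigma>2_def by auto
  have pA: "A permutes {1..n}" and pB: "B permutes {1..n}" and py: "y permutes {1..n}"
    using eAB eAy unfolding bruhat_edge_def by auto
  have c1: "\<tau>2 \<circ> \<tau>1 = C \<circ> inv' A"
    unfolding \<tau>1_def \<tau>2_def using permutes_inv_o(2)[OF pB] by (simp add: comp_assoc[symmetric]) (simp add: comp_assoc)
  have c2: "\<sigma>2 \<circ> \<sigma>1 = C \<circ> inv' A"
    unfolding \<sigma>1_def \<sigma>2_def using permutes_inv_o(2)[OF py] by (simp add: comp_assoc[symmetric]) (simp add: comp_assoc)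
  have ne: "\<tau>1 \<noteq> \<tau>2"
  proof
    assume "\<tau>1 = \<tau>2"
    then have "C \<circ> inv' A = id" using c1 trans_invol[OF t1] by simp
    then have "C \<circ> inv' A \<circ> A = A" by simp
    then have "C = A" using permutes_inv_o(2)[OF pA] by (simp add: comp_assoc)
    moreover have "perm_length n A < perm_length n C" using eAB eBC unfolding bruhat_edge_def by auto
    ultimately show False by simp
  qed
  have L1: "\<tau>1 \<in> set (path_labels xs)"
  proof -
    have "i - 1 < length (path_labels xs)" using i by (simp add: len_labels)
    moreover have "path_labels xs ! (i-1) = \<tau>1" using labels_nth[of "i-1" xs] i1
      by (simp add: A_def B_def \<tau>1_def)
    ultimately show ?thesis by (metis nth_mem)
  qed
  have L2: "\<tau>2 \<in> set (path_labels xs)"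
  proof -
    have "i < length (path_labels xs)" using i by (simp add: len_labels)
    moreover have "path_labels xs ! i = \<tau>2" using labels_nth[of i xs] i
      by (simp add: C_def B_def \<tau>2_def)
    ultimately show ?thesis by (metis nth_mem)
  qed
  have sub: "{\<tau>1, \<tau>2} \<subseteq> set (path_labels xs)" using L1 L2 by auto
  obtain j where j: "j < length ys - 1" "\<sigma> = path_labels ys ! j"
    using sg by (auto simp: in_set_conv_nth len_labels)
  have sj: "\<sigma> = ys!(j+1) \<circ> inv' (ys!j)" using j labels_nth by auto
  consider "j = i - 1" | "j = i" | "j \<noteq> i - 1" "j \<noteq> i" by blast
  then show ?thesis
  proof cases
    case 1
    then have "\<sigma> = \<sigma>1" using sj ysA ysy i \<sigma>1_def by simp
    then show ?thesis using good_mono[OF CL2[OF t1 t2 s1 s2 ne c2[folded c1]] sub] by simp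
  next
    case 2
    then have "\<sigma> = \<sigma>2" using sj ysC ysy i \<sigma>2_def by simp
    then show ?thesis using good_mono[OF CL2[OF t1 t2 s1 s2 ne c2[folded c1]] sub] by simp
  next
    case 3
    then have "ys!(j+1) = xs!(j+1)" "ys!j = xs!j" using y by auto
    then have "\<sigma> = path_labels xs ! j" using sj j len labels_nth[of j xs] by simp
    then show ?thesis using j len unfolding good_def by (simp add: len_labels)
  qed
qed

lemma flip_sym: "flip_at n i xs ys \<Longrightarrow> flip_at n i ys xs"
proof -
  assume "flip_at n i xs ys"
  then obtain y where h: "bruhat_path n xs" "1 \<le> i" "i + 1 < length xs" "y \<noteq> xs ! i"
    "ys = xs[i := y]" "bruhat_path n ys" unfolding flip_at_def by blast
  have "ys ! i = y" "ys[i := xs ! i] = xs" using h by auto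
  then show ?thesis unfolding flip_at_def using h by (metis length_list_update)
qed

lemma adj_char: "G_adj xs = {(a,b). a \<noteq> b \<and> transpose a b \<in> set (path_labels xs)}"
proof -
  have "(\<exists>i. 1 \<le> i \<and> i \<le> length (path_labels xs) \<and> path_labels xs ! (i - 1) = transpose a b)
      \<longleftrightarrow> transpose a b \<in> set (path_labels xs)" for a b
  proof
    assume "\<exists>i. 1 \<le> i \<and> i \<le> length (path_labels xs) \<and> path_labels xs ! (i - 1) = transpose a b"
    then obtain i where "1 \<le> i" "i \<le> length (path_labels xs)" "path_labels xs ! (i - 1) = transpose a b"
      by blast
    moreover have "i - 1 < length (path_labels xs)" using \<open>1 \<le> i\<close> \<open>i \<le> length (path_labels xs)\<close> by simp
    ultimately show "transpose a b \<in> set (path_labels xs)" by (metis nth_mem)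
  next
    assume "transpose a b \<in> set (path_labels xs)"
    then obtain j where "j < length (path_labels xs)" "path_labels xs ! j = transpose a b"
      by (auto simp: in_set_conv_nth)
    then show "\<exists>i. 1 \<le> i \<and> i \<le> length (path_labels xs) \<and> path_labels xs ! (i - 1) = transpose a b"
      by (intro exI[of _ "Suc j"]) auto
  qed
  then show ?thesis unfolding G_adj_def G_edges_def by auto
qed

lemma good_W:
  assumes "L \<subseteq> carrier (sym_group n)" "\<forall>\<sigma>\<in>L'. good L \<sigma>"
  shows "generate (sym_group n) L' \<subseteq> generate (sym_group n) L"
proof -
  interpret group "sym_group n" by (rule sym_group_is_group)
  have "L' \<subseteq> generate (sym_group n) L"
  proof
    fix \<sigma> assume "\<sigma> \<in> L'"
    then have "good L \<sigma>" using assms(2) by blast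
    then show "\<sigma> \<in> generate (sym_group n) L" unfolding good_def
    proof (elim disjE exE conjE)
      assume "\<sigma> \<in> L" then show ?thesis by (rule generate.incl)
    next
      fix x y z assume h: "x \<noteq> y" "x \<noteq> z" "y \<noteq> z" "\<sigma> = transpose y z"
        "transpose x y \<in> L" "transpose x z \<in> L"
      have e: "\<sigma> = transpose x y \<circ> transpose x z \<circ> transpose x y"
        using h by (auto simp: fun_eq_iff transpose_def)
      have "transpose x y \<otimes>\<^bsub>sym_group n\<^esub> transpose x z \<otimes>\<^bsub>sym_group n\<^esub> transpose x y
          \<in> generate (sym_group n) L"
        by (intro generate.eng generate.incl h(5,6))
      then show ?thesis using e by (simp add: sym_group_def)
    qed
  qed
  then show ?thesis using generate_subgroup_incl generate_is_subgroup[OF assms(1)] by blast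
qed

lemma good_V:
  assumes "\<forall>\<sigma>\<in>L'. good L \<sigma>"
  shows "{a \<in> {1..n}. \<exists>t\<in>L'. t a \<noteq> a} \<subseteq> {a \<in> {1..n}. \<exists>t\<in>L. t a \<noteq> a}"
proof clarify
  fix a t assume a: "a \<in> {1..n}" "t \<in> L'" "t a \<noteq> a"
  have "good L t" using assms a by blast
  then show "\<exists>t\<in>L. t a \<noteq> a" unfolding good_def
  proof (elim disjE exE conjE)
    assume "t \<in> L" then show ?thesis using a by blast
  next
    fix x y z assume h: "x \<noteq> y" "x \<noteq> z" "y \<noteq> z" "t = transpose y z"
        "transpose x y \<in> L" "transpose x z \<in> L"
    then have "a = y \<or> a = z" using a(3) by (auto simp: transpose_def split: if_splits)
    then show ?thesis using h by (metis transpose_apply_second)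
  qed
qed

lemma good_adj:
  fixes L L' :: "(nat \<Rightarrow> nat) set"
  assumes "\<forall>\<sigma>\<in>L'. good L \<sigma>"
  shows "{(a,b). a \<noteq> b \<and> transpose a b \<in> L'} \<subseteq> ({(a,b). a \<noteq> b \<and> transpose a b \<in> L})\<^sup>*"
proof clarify
  fix a b :: nat assume ab: "a \<noteq> b" "transpose a b \<in> L'"
  let ?R = "{(a,b). a \<noteq> b \<and> transpose a b \<in> L}"
  have "good L (transpose a b)" using assms ab by blast
  then show "(a, b) \<in> ?R\<^sup>*" unfolding good_def
  proof (elim disjE exE conjE)
    assume "transpose a b \<in> L" then show ?thesis using ab by auto
  next
    fix x y z assume h: "x \<noteq> y" "x \<noteq> z" "y \<noteq> z" "transpose a b = transpose y z"
        "transpose x y \<in> L" "transpose x z \<in> L"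
    have r: "(x,y) \<in> ?R" "(y,x) \<in> ?R" "(x,z) \<in> ?R" "(z,x) \<in> ?R"
      using h by (auto simp: transpose_commute)
    have "(a=y\<and>b=z)\<or>(a=z\<and>b=y)" using teq[OF ab(1) h(4)] .
    then show ?thesis
    proof
      assume "a=y\<and>b=z" then show ?thesis
        using r by (meson converse_rtrancl_into_rtrancl r_into_rtrancl)
    next
      assume "a=z\<and>b=y" then show ?thesis
        using r by (meson converse_rtrancl_into_rtrancl r_into_rtrancl)
    qed
  qed
qed

lemma flip_incl:
  assumes "flip_at n i xs ys"
  shows "W_group n ys \<subseteq> W_group n xs \<and> G_vertices n ys \<subseteq> G_vertices n xs
    \<and> (G_adj ys)\<^sup>* \<subseteq> (G_adj xs)\<^sup>*"
proof -
  have g: "\<forall>\<sigma>\<in>set (path_labels ys). good (set (path_labels xs)) \<sigma>"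
    using flip_good[OF assms] by blast
  have bp: "bruhat_path n xs" using assms unfolding flip_at_def by blast
  have c: "set (path_labels xs) \<subseteq> carrier (sym_group n)"
    using labels_trans[OF bp] trans_carrier by blast
  have 1: "W_group n ys \<subseteq> W_group n xs" unfolding W_group_def by (rule good_W[OF c g])
  have 2: "G_vertices n ys \<subseteq> G_vertices n xs" unfolding G_vertices_def by (rule good_V[OF g])
  have 3: "(G_adj ys)\<^sup>* \<subseteq> (G_adj xs)\<^sup>*" unfolding adj_char
    by (rule rtrancl_subset_rtrancl[OF good_adj[OF g]])
  show ?thesis using 1 2 3 by simp
qed

lemma flip_eq:
  assumes "flip_step n xs ys"
  shows "W_group n xs = W_group n ys \<and> G_vertices n xs = G_vertices n ys
    \<and> (G_adj xs)\<^sup>* = (G_adj ys)\<^sup>*"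
proof -
  obtain i where "flip_at n i xs ys" using assms unfolding flip_step_def by blast
  then show ?thesis using flip_incl[of n i xs ys] flip_incl[OF flip_sym, of n i xs ys] by blast
qed

theorem lemma6p1:
  fixes n :: nat and \<Gamma> \<Gamma>' :: "(nat \<Rightarrow> nat) list"
  assumes "same_flipclass n \<Gamma> \<Gamma>'"
  shows "W_group n \<Gamma> = W_group n \<Gamma>'
    \<and> G_vertices n \<Gamma> = G_vertices n \<Gamma>'
    \<and> G_num_components n \<Gamma> = G_num_components n \<Gamma>'"
proof -
  have r: "(flip_step n)\<^sup>*\<^sup>* \<Gamma> \<Gamma>'" using assms unfolding same_flipclass_def by blast
  have "W_group n \<Gamma> = W_group n \<Gamma>' \<and> G_vertices n \<Gamma> = G_vertices n \<Gamma>'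
    \<and> (G_adj \<Gamma>)\<^sup>* = (G_adj \<Gamma>')\<^sup>*"
    using r
  proof (induction rule: rtranclp_induct)
    case base then show ?case by simp
  next
    case (step y z)
    have e: "W_group n y = W_group n z \<and> G_vertices n y = G_vertices n z
      \<and> (G_adj y)\<^sup>* = (G_adj z)\<^sup>*" by (rule flip_eq[OF step.hyps(2)])
    show ?case using step.IH e by (elim conjE) (intro conjI; simp only:)
  qed
  then have e: "W_group n \<Gamma> = W_group n \<Gamma>'" "G_vertices n \<Gamma> = G_vertices n \<Gamma>'"
    "(G_adj \<Gamma>)\<^sup>* = (G_adj \<Gamma>')\<^sup>*" by blast+
  have "G_components n \<Gamma> = G_components n \<Gamma>'" unfolding G_components_def e(2,3) ..
  then show ?thesis using e unfolding G_num_components_def by simp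
qed

end
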